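(* Let $\mathcal C\subseteq\{0,1\}^n$ and $\mathcal D\subseteq\{0,1\}^m$ be neural codes and $\phi:R_\mathcal D\to R_\mathcal C$ a ring isomorphism. Then $\phi$ is a neural ring isomorphism if and only if the associated code map $q_\phi:\mathcal C\to\mathcal D$ is a permutation of labels, i.e. $m=n$ and there is a permutation $\sigma$ of $[n]$ such that $q_\phi(c)=(c_{\sigma(1)},\dots,c_{\sigma(n)})$ for all $c\in\mathcal C$ and $q_\phi$ is a bijection onto $\mathcal D$.
   Context: For a code $\mathcal C\subseteq\{0,1\}^n$, $R_\mathcal C$ is the ring of all functions $\mathcal C\to\mathbb F_2$, and $R[n]=R_{\{0,1\}^n}=\mathbb F_2[x_1,\dots,x_n]/\langle x_i^2-x_i\rangle$; $R_\mathcal C$ is an $R[n]$-module via $(r\cdot f)(c)=r(c)f(c)$. $\rho_c$ denotes the indicator function of $\{c\}$. For a ring homomorphism $\phi:R_\mathcal D\to R_\mathcal C$, the associated code map $q_\phi:\mathcal C\to\mathcal D$ sends $c$ to the unique $d\in\mathcal D$ with $\phi(\rho_d)(c)=1$. A ring homomorphism $\tau:R[m]\to R[n]$ is compatible with $\phi$ if $\phi(r\cdot f)=\tau(r)\cdot\phi(f)$ for all $r\in R[m]$, $f\in R_\mathcal D$; it is linear-monomial if $\tau(x_i)\in\{x_1,\dots,x_n,0,1\}$ for all $i$. A neural ring isomorphism is a ring isomorphism $\phi:R_\mathcal D\to R_\mathcal C$ for which there exists a compatible linear-monomial ring isomorphism $\tau:R[m]\to R[n]$. *)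

theory Defs
  imports Main "HOL-Library.Z2" "HOL-Combinatorics.Permutations"
begin

text \<open>Codewords of length n are boolean lists of length n; coordinates are 0-based.  An element of R_C (a function C to F2) is represented
  by a function on all lists that vanishes outside C.\<close>

definition hcube :: "nat \<Rightarrow> bool list set" where
  "hcube n = {c. length c = n}"

definition RC :: "bool list set \<Rightarrow> (bool list \<Rightarrow> bit) set" where
  "RC C = {f. \<forall>x. x \<notin> C \<longrightarrow> f x = 0}"

definition one_on :: "bool list set \<Rightarrow> bool list \<Rightarrow> bit" where
  "one_on C = (\<lambda>x. if x \<in> C then 1 else 0)"

definition zero_fn :: "bool list \<Rightarrow> bit" where
  "zero_fn = (\<lambda>x. 0)"

definition rho :: "bool list \<Rightarrow> bool list \<Rightarrow> bit" where
  "rho c = (\<lambda>x. if x = c then 1 else 0)"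

definition is_ring_hom ::
  "bool list set \<Rightarrow> bool list set \<Rightarrow> ((bool list \<Rightarrow> bit) \<Rightarrow> (bool list \<Rightarrow> bit)) \<Rightarrow> bool" where
  "is_ring_hom D C \<phi> \<longleftrightarrow>
     (\<forall>f\<in>RC D. \<phi> f \<in> RC C) \<and>
     (\<forall>f\<in>RC D. \<forall>g\<in>RC D. \<phi> (\<lambda>x. f x + g x) = (\<lambda>x. \<phi> f x + \<phi> g x)) \<and>
     (\<forall>f\<in>RC D. \<forall>g\<in>RC D. \<phi> (\<lambda>x. f x * g x) = (\<lambda>x. \<phi> f x * \<phi> g x)) \<and>
     \<phi> (one_on D) = one_on C"

definition is_ring_iso ::
  "bool list set \<Rightarrow> bool list set \<Rightarrow> ((bool list \<Rightarrow> bit) \<Rightarrow> (bool list \<Rightarrow> bit)) \<Rightarrow> bool" where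
  "is_ring_iso D C \<phi> \<longleftrightarrow> is_ring_hom D C \<phi> \<and> bij_betw \<phi> (RC D) (RC C)"

definition Rn :: "nat \<Rightarrow> (bool list \<Rightarrow> bit) set" where
  "Rn n = RC (hcube n)"

definition xvar :: "nat \<Rightarrow> nat \<Rightarrow> bool list \<Rightarrow> bit" where
  "xvar n i = (\<lambda>c. if length c = n \<and> c ! i then 1 else 0)"

definition act :: "(bool list \<Rightarrow> bit) \<Rightarrow> (bool list \<Rightarrow> bit) \<Rightarrow> bool list \<Rightarrow> bit" where
  "act r f = (\<lambda>c. r c * f c)"

definition qmap :: "bool list set \<Rightarrow> ((bool list \<Rightarrow> bit) \<Rightarrow> (bool list \<Rightarrow> bit)) \<Rightarrow> bool list \<Rightarrow> bool list" where
  "qmap D \<phi> c = (THE d. d \<in> D \<and> \<phi> (rho d) c = 1)"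

definition compatible ::
  "nat \<Rightarrow> bool list set \<Rightarrow> ((bool list \<Rightarrow> bit) \<Rightarrow> (bool list \<Rightarrow> bit)) \<Rightarrow> ((bool list \<Rightarrow> bit) \<Rightarrow> (bool list \<Rightarrow> bit)) \<Rightarrow> bool" where
  "compatible m D \<phi> \<tau> \<longleftrightarrow> (\<forall>r\<in>Rn m. \<forall>f\<in>RC D. \<phi> (act r f) = act (\<tau> r) (\<phi> f))"

definition linear_monomial :: "nat \<Rightarrow> nat \<Rightarrow> ((bool list \<Rightarrow> bit) \<Rightarrow> (bool list \<Rightarrow> bit)) \<Rightarrow> bool" where
  "linear_monomial m n \<tau> \<longleftrightarrow>
     (\<forall>i<m. \<tau> (xvar m i) \<in> {xvar n j | j. j < n} \<union> {zero_fn, one_on (hcube n)})"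

definition neural_ring_iso ::
  "nat \<Rightarrow> nat \<Rightarrow> bool list set \<Rightarrow> bool list set \<Rightarrow> ((bool list \<Rightarrow> bit) \<Rightarrow> (bool list \<Rightarrow> bit)) \<Rightarrow> bool" where
  "neural_ring_iso m n D C \<phi> \<longleftrightarrow>
     is_ring_iso D C \<phi> \<and>
     (\<exists>\<tau>. is_ring_iso (hcube m) (hcube n) \<tau> \<and> linear_monomial m n \<tau> \<and> compatible m D \<phi> \<tau>)"

end

theory Submission
  imports Defs
begin

lemma bit_cases2: "(b::bit) = 0 \<or> b = 1" by (cases b) auto

lemma finite_hcube: "finite (hcube k)"
proof -
  have "hcube k = {xs. set xs \<subseteq> (UNIV::bool set) \<and> length xs = k}" by (auto simp: hcube_def)
  then show ?thesis using finite_lists_length_eq[of "UNIV::bool set" k] by simp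
qed

lemma card_hcube: "card (hcube k) = 2 ^ k"
proof -
  have "hcube k = {xs. set xs \<subseteq> (UNIV::bool set) \<and> length xs = k}" by (auto simp: hcube_def)
  then show ?thesis using card_lists_length_eq[of "UNIV::bool set" k] by simp
qed

lemma zero_RC: "(\<lambda>x. 0) \<in> RC D" by (simp add: RC_def)
lemma rho_RC: "d \<in> D \<Longrightarrow> rho d \<in> RC D" by (simp add: RC_def rho_def)
lemma one_on_RC: "one_on D \<in> RC D" by (simp add: RC_def one_on_def)

lemma hom_zero:
  assumes "is_ring_hom D C \<phi>"
  shows "\<phi> (\<lambda>x. 0) = (\<lambda>x. 0)"
proof -
  have add: "\<forall>f\<in>RC D. \<forall>g\<in>RC D. \<phi> (\<lambda>x. f x + g x) = (\<lambda>x. \<phi> f x + \<phi> g x)"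
    using assms unfolding is_ring_hom_def by blast
  have "\<phi> (\<lambda>x. (0::bit) + 0) = (\<lambda>x. \<phi> (\<lambda>x. 0) x + \<phi> (\<lambda>x. 0) x)"
    using add[rule_format, OF zero_RC zero_RC] .
  moreover have "\<And>a::bit. a + a = 0" by (metis bit_cases2 add_0 bit_2_eq_0 one_add_one)
  ultimately show ?thesis by simp
qed

lemma hom_out:
  assumes "is_ring_hom D C \<phi>" "f \<in> RC D" "x \<notin> C"
  shows "\<phi> f x = 0"
  using assms unfolding is_ring_hom_def RC_def by blast

lemma hom_exists:
  assumes h: "is_ring_hom D C \<phi>" and fin: "finite D" and c: "c \<in> C"
  shows "\<exists>d\<in>D. \<phi> (rho d) c = 1"
proof (rule ccontr)
  assume "\<not> ?thesis"
  then have z: "\<forall>d\<in>D. \<phi> (rho d) c = 0" by auto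
  have "S \<subseteq> D \<Longrightarrow> \<phi> (one_on S) c = 0" for S
  proof -
    assume sD: "S \<subseteq> D"
    have "finite S" using sD fin finite_subset by blast
    then show ?thesis using sD
    proof (induction S rule: finite_induct)
      case empty
      have "one_on {} = (\<lambda>x. 0)" by (simp add: one_on_def)
      then show ?case using hom_zero[OF h] by simp
    next
      case (insert d S)
      have e: "one_on (insert d S) = (\<lambda>x. one_on S x + rho d x)"
        using insert.hyps by (auto simp: one_on_def rho_def)
      have "one_on S \<in> RC D" "rho d \<in> RC D" using insert.prems
        by (auto simp: RC_def one_on_def rho_def)
      then have "\<phi> (one_on (insert d S)) = (\<lambda>x. \<phi> (one_on S) x + \<phi> (rho d) x)"
        using h e unfolding is_ring_hom_def by simp
      then show ?case using insert z by simp
    qed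
  qed
  then have "\<phi> (one_on D) c = 0" by simp
  moreover have "\<phi> (one_on D) = one_on C" using h by (simp add: is_ring_hom_def)
  ultimately show False using c by (simp add: one_on_def)
qed

lemma hom_unique:
  assumes h: "is_ring_hom D C \<phi>" and d: "d \<in> D" "d' \<in> D"
    and "\<phi> (rho d) c = 1" "\<phi> (rho d') c = 1"
  shows "d = d'"
proof (rule ccontr)
  assume ne: "d \<noteq> d'"
  have "(\<lambda>x. rho d x * rho d' x) = (\<lambda>x. 0)" using ne by (auto simp: rho_def)
  moreover have "\<phi> (\<lambda>x. rho d x * rho d' x) = (\<lambda>x. \<phi> (rho d) x * \<phi> (rho d') x)"
    using h rho_RC d unfolding is_ring_hom_def by blast
  ultimately have "\<phi> (rho d) c * \<phi> (rho d') c = 0" using hom_zero[OF h] by metis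
  then show False using assms by simp
qed

lemma qmap_prop:
  assumes h: "is_ring_hom D C \<phi>" and fin: "finite D" and c: "c \<in> C"
  shows "qmap D \<phi> c \<in> D \<and> \<phi> (rho (qmap D \<phi> c)) c = 1"
proof -
  obtain d where d: "d \<in> D" "\<phi> (rho d) c = 1" using hom_exists[OF assms] by blast
  have "\<exists>!d. d \<in> D \<and> \<phi> (rho d) c = 1"
    using d hom_unique[OF h] by blast
  then show ?thesis unfolding qmap_def by (rule theI')
qed

lemma hom_pull:
  assumes h: "is_ring_hom D C \<phi>" and fin: "finite D" and c: "c \<in> C" and f: "f \<in> RC D"
  shows "\<phi> f c = f (qmap D \<phi> c)"
proof -
  define d where "d = qmap D \<phi> c"
  have dD: "d \<in> D" and one: "\<phi> (rho d) c = 1" using qmap_prop[OF h fin c] d_def by auto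
  have m: "\<phi> (\<lambda>x. f x * rho d x) = (\<lambda>x. \<phi> f x * \<phi> (rho d) x)"
    using h f rho_RC[OF dD] unfolding is_ring_hom_def by blast
  show ?thesis
  proof (cases "f d = 1")
    case True
    then have "(\<lambda>x. f x * rho d x) = rho d" by (auto simp: rho_def)
    then show ?thesis using m one True d_def by (metis mult.right_neutral)
  next
    case False
    then have "f d = 0" by simp
    then have "(\<lambda>x. f x * rho d x) = (\<lambda>x. 0)" by (auto simp: rho_def)
    then have "\<phi> f c * \<phi> (rho d) c = 0" using m hom_zero[OF h] by metis
    then show ?thesis using one \<open>f d = 0\<close> d_def by simp
  qed
qed

lemma iso_bij:
  assumes iso: "is_ring_iso D C \<phi>" and fin: "finite D"
  shows "bij_betw (qmap D \<phi>) C D"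
proof -
  have h: "is_ring_hom D C \<phi>" and b: "bij_betw \<phi> (RC D) (RC C)"
    using iso by (auto simp: is_ring_iso_def)
  have into: "qmap D \<phi> ` C \<subseteq> D" using qmap_prop[OF h fin] by auto
  have inj: "inj_on (qmap D \<phi>) C"
  proof (rule inj_onI)
    fix c1 c2 assume c: "c1 \<in> C" "c2 \<in> C" and eq: "qmap D \<phi> c1 = qmap D \<phi> c2"
    obtain g where g: "g \<in> RC D" "\<phi> g = rho c1"
      using b rho_RC[OF c(1)] unfolding bij_betw_def by (metis imageE)
    have "rho c1 c2 = rho c1 c1"
      using hom_pull[OF h fin c(1) g(1)] hom_pull[OF h fin c(2) g(1)] g(2) eq by simp
    then show "c1 = c2" by (auto simp: rho_def split: if_splits)
  qed
  have onto: "D \<subseteq> qmap D \<phi> ` C"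
  proof
    fix d assume d: "d \<in> D"
    show "d \<in> qmap D \<phi> ` C"
    proof (rule ccontr)
      assume nd: "d \<notin> qmap D \<phi> ` C"
      have "\<phi> (rho d) = \<phi> (\<lambda>x. 0)"
      proof
        fix x
        show "\<phi> (rho d) x = \<phi> (\<lambda>x. 0) x"
        proof (cases "x \<in> C")
          case True
          then show ?thesis using hom_pull[OF h fin True rho_RC[OF d]] nd hom_zero[OF h]
            by (auto simp: rho_def)
        next
          case False
          then show ?thesis using hom_out[OF h rho_RC[OF d]] hom_out[OF h zero_RC] by simp
        qed
      qed
      then have "rho d = (\<lambda>x. 0)" using b rho_RC[OF d] zero_RC
        unfolding bij_betw_def inj_on_def by blast
      then show False by (metis rho_def zero_neq_one)
    qed
  qed
  show ?thesis using into inj onto unfolding bij_betw_def by blast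
qed


lemma xvar_RC: "xvar n i \<in> Rn n" by (simp add: Rn_def RC_def xvar_def hcube_def)

lemma act_RC: "f \<in> RC D \<Longrightarrow> act r f \<in> RC D" by (simp add: RC_def act_def)

lemma forward:
  assumes C: "C \<subseteq> hcube n" and D: "D \<subseteq> hcube m"
    and iso: "is_ring_iso D C \<phi>"
    and tiso: "is_ring_iso (hcube m) (hcube n) \<tau>" and lm: "linear_monomial m n \<tau>"
    and comp: "compatible m D \<phi> \<tau>"
  shows "m = n \<and>
     (\<exists>\<sigma>. \<sigma> permutes {..<n} \<and> (\<forall>c\<in>C. qmap D \<phi> c = map (\<lambda>i. c ! \<sigma> i) [0..<n]))"
proof -
  have h: "is_ring_hom D C \<phi>" using iso by (simp add: is_ring_iso_def)
  have finD: "finite D" using D finite_hcube finite_subset by blast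
  have "bij_betw (qmap (hcube m) \<tau>) (hcube n) (hcube m)"
    using iso_bij[OF tiso finite_hcube] .
  then have "card (hcube n) = card (hcube m)" by (rule bij_betw_same_card)
  then have "(2::nat) ^ n = 2 ^ m" by (simp add: card_hcube)
  then have mn: "m = n" by simp
  have th: "is_ring_hom (hcube n) (hcube n) \<tau>" and tb: "bij_betw \<tau> (RC (hcube n)) (RC (hcube n))"
    using tiso mn by (auto simp: is_ring_iso_def)
  have tinj: "\<And>f g. f \<in> RC (hcube n) \<Longrightarrow> g \<in> RC (hcube n) \<Longrightarrow> \<tau> f = \<tau> g \<Longrightarrow> f = g"
    using tb unfolding bij_betw_def inj_on_def by blast
  have xR: "xvar n i \<in> RC (hcube n)" for i using xvar_RC[of n i] by (simp add: Rn_def)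
  have ex: "\<exists>j. j < n \<and> \<tau> (xvar n i) = xvar n j" if i: "i < n" for i
  proof -
    have "\<tau> (xvar n i) \<in> {xvar n j | j. j < n} \<union> {zero_fn, one_on (hcube n)}"
      using lm i mn by (simp add: linear_monomial_def)
    moreover have "\<tau> (xvar n i) \<noteq> zero_fn"
    proof
      assume "\<tau> (xvar n i) = zero_fn"
      then have "\<tau> (xvar n i) = \<tau> (\<lambda>x. 0)" using hom_zero[OF th] by (simp add: zero_fn_def)
      then have "xvar n i = (\<lambda>x. 0)" using tinj[OF xR zero_RC] by blast
      then have "xvar n i (replicate n True) = 0" by simp
      then show False using i by (simp add: xvar_def)
    qed
    moreover have "\<tau> (xvar n i) \<noteq> one_on (hcube n)"
    proof
      assume "\<tau> (xvar n i) = one_on (hcube n)"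
      then have "\<tau> (xvar n i) = \<tau> (one_on (hcube n))" using th by (simp add: is_ring_hom_def)
      then have "xvar n i = one_on (hcube n)" using tinj[OF xR one_on_RC] by blast
      then have "xvar n i (replicate n False) = one_on (hcube n) (replicate n False)" by simp
      then show False using i by (simp add: xvar_def one_on_def hcube_def)
    qed
    ultimately show ?thesis by blast
  qed
  then obtain s where s: "\<And>i. i < n \<Longrightarrow> s i < n \<and> \<tau> (xvar n i) = xvar n (s i)" by metis
  define \<sigma> where "\<sigma> i = (if i < n then s i else i)" for i
  have sig: "\<And>i. i < n \<Longrightarrow> \<sigma> i < n \<and> \<tau> (xvar n i) = xvar n (\<sigma> i)" using s by (simp add: \<sigma>_def)
  have inj: "inj_on \<sigma> {..<n}"
  proof (rule inj_onI)
    fix i j assume ij: "i \<in> {..<n}" "j \<in> {..<n}" "\<sigma> i = \<sigma> j"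
    then have "\<tau> (xvar n i) = \<tau> (xvar n j)" using sig by auto
    then have e: "xvar n i = xvar n j" using tinj[OF xR xR] by blast
    show "i = j"
    proof (rule ccontr)
      assume "i \<noteq> j"
      have "xvar n i ((replicate n False)[i := True]) = xvar n j ((replicate n False)[i := True])"
        using e by simp
      then show False using ij \<open>i \<noteq> j\<close> by (simp add: xvar_def)
    qed
  qed
  have "\<sigma> ` {..<n} = {..<n}"
    by (rule endo_inj_surj) (use sig inj in auto)
  then have "bij_betw \<sigma> {..<n} {..<n}" using inj by (simp add: bij_betw_def)
  then have perm: "\<sigma> permutes {..<n}" by (rule bij_imp_permutes) (simp add: \<sigma>_def)
  have q: "qmap D \<phi> c = map (\<lambda>i. c ! \<sigma> i) [0..<n]" if c: "c \<in> C" for c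
  proof (rule nth_equalityI)
    have "qmap D \<phi> c \<in> D" using qmap_prop[OF h finD c] by simp
    then show len: "length (qmap D \<phi> c) = length (map (\<lambda>i. c ! \<sigma> i) [0..<n])"
      using D mn by (auto simp: hcube_def)
    fix i assume "i < length (qmap D \<phi> c)"
    then have i: "i < n" using len by simp
    have lc: "length c = n" using C c by (auto simp: hcube_def)
    have "\<phi> (act (xvar m i) (one_on D)) = act (\<tau> (xvar m i)) (\<phi> (one_on D))"
      using comp xvar_RC one_on_RC unfolding compatible_def by blast
    then have "\<phi> (act (xvar m i) (one_on D)) c = act (\<tau> (xvar m i)) (\<phi> (one_on D)) c" by simp
    moreover have "\<phi> (act (xvar m i) (one_on D)) c = act (xvar m i) (one_on D) (qmap D \<phi> c)"
      using hom_pull[OF h finD c act_RC[OF one_on_RC]] .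
    moreover have "\<phi> (one_on D) = one_on C" using h by (simp add: is_ring_hom_def)
    ultimately have "act (xvar n i) (one_on D) (qmap D \<phi> c) = act (xvar n (\<sigma> i)) (one_on C) c"
      using sig[OF i] mn by simp
    then show "qmap D \<phi> c ! i = map (\<lambda>i. c ! \<sigma> i) [0..<n] ! i"
      using i lc c len qmap_prop[OF h finD c] sig[OF i]
      by (auto simp: act_def xvar_def one_on_def split: if_splits)
  qed
  show ?thesis using mn perm q by blast
qed


definition pl :: "nat \<Rightarrow> (nat \<Rightarrow> nat) \<Rightarrow> bool list \<Rightarrow> bool list" where
  "pl n \<sigma> c = map (\<lambda>i. c ! \<sigma> i) [0..<n]"

definition tau :: "nat \<Rightarrow> (nat \<Rightarrow> nat) \<Rightarrow> (bool list \<Rightarrow> bit) \<Rightarrow> bool list \<Rightarrow> bit" where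
  "tau n \<sigma> r = (\<lambda>c. if length c = n then r (pl n \<sigma> c) else 0)"

lemma pl_pl:
  assumes "\<sigma> permutes {..<n}" "\<rho> permutes {..<n}" "\<And>i. i < n \<Longrightarrow> \<sigma> (\<rho> i) = i" "length c = n"
  shows "pl n \<rho> (pl n \<sigma> c) = c"
proof -
  have "\<And>i. i < n \<Longrightarrow> \<rho> i < n" using assms(2) permutes_in_image by fastforce
  then show ?thesis using assms by (auto simp: pl_def intro!: nth_equalityI)
qed

lemma tau_tau:
  assumes "\<sigma> permutes {..<n}" "\<rho> permutes {..<n}" "\<And>i. i < n \<Longrightarrow> \<sigma> (\<rho> i) = i"
    "r \<in> RC (hcube n)"
  shows "tau n \<sigma> (tau n \<rho> r) = r"
proof
  fix c show "tau n \<sigma> (tau n \<rho> r) c = r c"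
    using assms pl_pl[OF assms(1-3)] by (auto simp: tau_def pl_def RC_def hcube_def)
qed

lemma backward:
  assumes C: "C \<subseteq> hcube n" and D: "D \<subseteq> hcube m"
    and iso: "is_ring_iso D C \<phi>" and mn: "m = n" and perm: "\<sigma> permutes {..<n}"
    and q: "\<forall>c\<in>C. qmap D \<phi> c = map (\<lambda>i. c ! \<sigma> i) [0..<n]"
  shows "neural_ring_iso m n D C \<phi>"
proof -
  have h: "is_ring_hom D C \<phi>" using iso by (simp add: is_ring_iso_def)
  have finD: "finite D" using D finite_hcube finite_subset by blast
  have ip: "inv \<sigma> permutes {..<n}" using perm by (rule permutes_inv)
  have l1: "\<And>i. i < n \<Longrightarrow> inv \<sigma> (\<sigma> i) = i" using perm permutes_inverses(2) by fastforce
  have l2: "\<And>i. i < n \<Longrightarrow> \<sigma> (inv \<sigma> i) = i" using perm permutes_inverses(1) by fastforce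
  have tR: "\<And>\<rho> r. tau n \<rho> r \<in> RC (hcube n)" by (simp add: tau_def RC_def hcube_def)
  have hom: "is_ring_hom (hcube n) (hcube n) (tau n \<sigma>)"
    unfolding is_ring_hom_def
    apply (intro conjI)
    using tR apply blast
    by (auto simp: tau_def one_on_def hcube_def pl_def fun_eq_iff)
  have bij: "bij_betw (tau n \<sigma>) (RC (hcube n)) (RC (hcube n))"
    by (rule bij_betw_byWitness[where f' = "tau n (inv \<sigma>)"])
       (auto simp: tR tau_tau[OF ip perm l1] tau_tau[OF perm ip l2])
  have lm: "linear_monomial n n (tau n \<sigma>)"
    unfolding linear_monomial_def
  proof (intro allI impI)
    fix i assume i: "i < n"
    have si: "\<sigma> i < n" using perm i permutes_in_image by fastforce
    have "tau n \<sigma> (xvar n i) = xvar n (\<sigma> i)"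
      using i by (auto simp: tau_def xvar_def pl_def fun_eq_iff)
    then show "tau n \<sigma> (xvar n i) \<in> {xvar n j |j. j < n} \<union> {zero_fn, one_on (hcube n)}"
      using si by blast
  qed
  have comp: "compatible n D \<phi> (tau n \<sigma>)"
    unfolding compatible_def
  proof (intro ballI)
    fix r f assume r: "r \<in> Rn n" and f: "f \<in> RC D"
    show "\<phi> (act r f) = act (tau n \<sigma> r) (\<phi> f)"
    proof
      fix c show "\<phi> (act r f) c = act (tau n \<sigma> r) (\<phi> f) c"
      proof (cases "c \<in> C")
        case True
        then have "length c = n" using C by (auto simp: hcube_def)
        then show ?thesis using hom_pull[OF h finD True act_RC[OF f]] hom_pull[OF h finD True f]
            q True by (simp add: act_def tau_def pl_def)
      next
        case False
        then show ?thesis using hom_out[OF h act_RC[OF f] False] hom_out[OF h f False]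
          by (simp add: act_def)
      qed
    qed
  qed
  show ?thesis unfolding neural_ring_iso_def using iso hom bij lm comp mn
    by (auto simp: is_ring_iso_def)
qed

theorem corollary1:
  fixes C D :: "bool list set" and n m :: nat
    and \<phi> :: "(bool list \<Rightarrow> bit) \<Rightarrow> (bool list \<Rightarrow> bit)"
  assumes "C \<subseteq> hcube n" and "D \<subseteq> hcube m"
    and "is_ring_iso D C \<phi>"
  shows "neural_ring_iso m n D C \<phi> \<longleftrightarrow>
    (m = n \<and>
     (\<exists>\<sigma>. \<sigma> permutes {..<n} \<and> (\<forall>c\<in>C. qmap D \<phi> c = map (\<lambda>i. c ! \<sigma> i) [0..<n])) \<and>
     bij_betw (qmap D \<phi>) C D)"
proof -
  have finD: "finite D" using assms(2) finite_hcube finite_subset by blast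
  have b: "bij_betw (qmap D \<phi>) C D" using iso_bij[OF assms(3) finD] .
  show ?thesis
  proof
    assume "neural_ring_iso m n D C \<phi>"
    then obtain \<tau> where "is_ring_iso (hcube m) (hcube n) \<tau>" "linear_monomial m n \<tau>"
      "compatible m D \<phi> \<tau>" by (auto simp: neural_ring_iso_def)
    then show "m = n \<and>
     (\<exists>\<sigma>. \<sigma> permutes {..<n} \<and> (\<forall>c\<in>C. qmap D \<phi> c = map (\<lambda>i. c ! \<sigma> i) [0..<n])) \<and>
     bij_betw (qmap D \<phi>) C D"
      using forward[OF assms] b by blast
  next
    assume "m = n \<and>
     (\<exists>\<sigma>. \<sigma> permutes {..<n} \<and> (\<forall>c\<in>C. qmap D \<phi> c = map (\<lambda>i. c ! \<sigma> i) [0..<n])) \<and>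
     bij_betw (qmap D \<phi>) C D"
    then show "neural_ring_iso m n D C \<phi>" using backward[OF assms] by blast
  qed
qed

end
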